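(* Let $m\ge2$, let $\mathbf A$ be the $(m-1)\times(m-1)$ tridiagonal matrix with $2$ on the diagonal and $-1$ on the sub- and super-diagonals, and let $\mathbf x(\varepsilon)$ be the solution of $e^{-\mathbf x}=\frac{\varepsilon^2}{8}\mathbf A^{-1}\mathbf x$ satisfying $\mathbf x=-2\log(\varepsilon)\mathbf 1-\log|\log\varepsilon|\mathbf 1+2\log(2)\mathbf 1-\log(\mathbf A^{-1}\mathbf 1)+o(1)$. Put $\mathbf w=\mathbf A^{-1}\mathbf x$ and consider the eigenvalue problem for $(\omega^2,\xi)$, $\xi\in\mathbb R^{m-1}\setminus\{0\}$: $$ (2-\omega^2)\xi_j-2\big(w_{j+1}\xi_{j+1}-2w_j\xi_j+w_{j-1}\xi_{j-1}\big)=0,\quad j=1,\dots,m-1, $$ with the convention $w_0\xi_0=w_m\xi_m=0$. Then for sufficiently small $\varepsilon>0$ its $m-1$ eigenvalues can be labelled $\omega_1^2,\dots,\omega_{m-1}^2$ so that $$ \omega_n^2=2+\big(-4\log\varepsilon-2\log|\log\varepsilon|+4\log2\big)\frac{n(n+1)}{2}+\mathcal O(1)\quad\text{as }\varepsilon\to0,\qquad n=1,\dots,m-1 . $$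
   Context: For a vector $\mathbf y$, $\log\mathbf y$ denotes the componentwise logarithm; $\mathbf 1=(1,\dots,1)^T\in\mathbb R^{m-1}$. The values $n(n+1)/2$, $n=1,\dots,m-1$, form the set $\{1,3,6,\dots,m(m-1)/2\}$. *)

theory Defs
  imports "HOL-Analysis.Analysis" "Jordan_Normal_Form.Gauss_Jordan_Elimination" "Jordan_Normal_Form.Char_Poly"
begin

text \<open>The (m-1) x (m-1) tridiagonal matrix with 2 on the diagonal and -1 on the
  sub- and super-diagonals (0-based indices i,j < m-1; index i corresponds to j=i+1
  of the paper).\<close>
definition Amat :: "nat \<Rightarrow> real mat" where
  "Amat m = mat (m - 1) (m - 1)
     (\<lambda>(i, j). if i = j then 2 else if i = j + 1 \<or> j = i + 1 then -1 else 0)"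

text \<open>The inverse matrix A^{-1} (A is invertible, so mat_inverse returns Some).\<close>
definition Ainv :: "nat \<Rightarrow> real mat" where
  "Ainv m = the (mat_inverse (Amat m))"

text \<open>Matrix of the eigenvalue problem
  (2 - om) xi_j - 2 (w_{j+1} xi_{j+1} - 2 w_j xi_j + w_{j-1} xi_{j-1}) = 0,
  with w_0 xi_0 = w_m xi_m = 0, written as  M xi = om xi, i.e.
  M = 2 I + 2 A diag(w).\<close>
definition eig_mat :: "nat \<Rightarrow> real vec \<Rightarrow> real mat" where
  "eig_mat m w = mat (m - 1) (m - 1)
     (\<lambda>(i, j). (if i = j then 2 else 0) + 2 * (Amat m $$ (i, j)) * (w $ j))"

end

theory Submission
  imports Defs
begin

fun ff :: "real \<Rightarrow> nat \<Rightarrow> real" where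
  "ff x 0 = 1"
| "ff x (Suc k) = x * ff (x - 1) k"

declare ff.simps(2)[simp del]

lemma ff_Suc_right: "ff x (Suc k) = ff x k * (x - real k)"
proof (induction k arbitrary: x)
  case 0 then show ?case by (simp add: ff.simps)
next
  case (Suc k)
  have "ff x (Suc (Suc k)) = x * ff (x-1) (Suc k)" by (simp add: ff.simps)
  also have "\<dots> = x * (ff (x-1) k * (x - 1 - real k))" using Suc by simp
  also have "\<dots> = (x * ff (x-1) k) * (x - real (Suc k))" by (simp add: algebra_simps)
  also have "\<dots> = ff x (Suc k) * (x - real (Suc k))" by (simp add: ff.simps)
  finally show ?case .
qed

lemma ff_diff: "ff (x + 1) (Suc k) - ff x (Suc k) = real (Suc k) * ff x k"
proof (induction k arbitrary: x)
  case 0 then show ?case by (simp add: ff.simps)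
next
  case (Suc k)
  have IH: "ff x (Suc k) - ff (x - 1) (Suc k) = real (Suc k) * ff (x - 1) k"
    using Suc[of "x - 1"] by simp
  have "ff (x + 1) (Suc (Suc k)) - ff x (Suc (Suc k)) = (x+1) * ff x (Suc k) - x * ff (x - 1) (Suc k)"
    by (simp add: ff.simps)
  also have "\<dots> = ff x (Suc k) + x * (ff x (Suc k) - ff (x - 1) (Suc k))" by (simp add: algebra_simps)
  also have "\<dots> = ff x (Suc k) + real (Suc k) * (x * ff (x - 1) k)" using IH by (simp add: algebra_simps)
  also have "\<dots> = real (Suc (Suc k)) * ff x (Suc k)" by (simp add: algebra_simps ff.simps)
  finally show ?case .
qed

definition lamp :: "nat \<Rightarrow> real" where "lamp k = real k * (real k - 1) / 2"
definition bet :: "nat \<Rightarrow> nat \<Rightarrow> real" where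
  "bet m k = real k * (real k - 1) * (real m - real k + 1) / 2"

lemma Tff:
  assumes "k \<ge> 1"
  shows "x * (real m - x) / 2 * (2 * ff x k - ff (x - 1) k - ff (x + 1) k)
         = lamp k * ff x k - bet m k * ff x (k - 1)"
proof (cases "k = 1")
  case True then show ?thesis by (simp add: lamp_def bet_def algebra_simps ff.simps)
next
  case False
  then obtain j where k: "k = Suc (Suc j)" using assms by (metis One_nat_def Suc_le_D le_SucE not_less_eq_eq)
  have d1: "ff (x + 1) k - ff x k = real k * ff x (Suc j)" using ff_diff[of x "Suc j"] k by simp
  have d2: "ff x k - ff (x - 1) k = real k * ff (x - 1) (Suc j)" using ff_diff[of "x - 1" "Suc j"] k by simp
  have d3: "ff x (Suc j) - ff (x - 1) (Suc j) = real (Suc j) * ff (x - 1) j" using ff_diff[of "x - 1" j] by simp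
  have "2 * ff x k - ff (x - 1) k - ff (x + 1) k = - (real k * ff x (Suc j) - real k * ff (x - 1) (Suc j))"
    using d1 d2 by linarith
  also have "\<dots> = - (real k * (ff x (Suc j) - ff (x - 1) (Suc j)))" by (simp only: right_diff_distrib)
  also have "\<dots> = - (real k * real (Suc j) * ff (x - 1) j)" unfolding d3 by simp
  finally have S: "2 * ff x k - ff (x - 1) k - ff (x + 1) k = - (real k * real (Suc j) * ff (x - 1) j)" .
  have e1: "x * ff (x - 1) j = ff x (Suc j)" by (simp add: ff.simps)
  have e2: "ff x k = ff x (Suc j) * (x - real (Suc j))" using ff_Suc_right[of x "Suc j"] k by simp
  have "x * (real m - x) / 2 * (2 * ff x k - ff (x - 1) k - ff (x + 1) k)
      = - (real k * real (Suc j) / 2) * ((real m - x) * ff x (Suc j))"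
    unfolding S e1[symmetric] by (simp add: field_simps)
  also have "(real m - x) * ff x (Suc j) = (real m - real (Suc j)) * ff x (Suc j) - ff x k"
    unfolding e2 by (simp add: algebra_simps)
  finally have X: "x * (real m - x) / 2 * (2 * ff x k - ff (x - 1) k - ff (x + 1) k)
      = - (real k * real (Suc j) / 2) * ((real m - real (Suc j)) * ff x (Suc j) - ff x k)" .
  have r: "real k = real j + 2" using k by simp
  have km: "k - 1 = Suc j" using k by simp
  show ?thesis unfolding X lamp_def bet_def km r by (simp add: field_simps)
qed

lemma lamp_lt: assumes "1 \<le> i" "i < d" shows "lamp i < lamp d"
proof -
  have "real i * (real i - 1) < real d * (real d - 1)"
  proof -
    have a: "real i + 1 \<le> real d" using assms by linarith
    have "real i * (real i - 1) < real i * real i" using assms by simp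
    also have "\<dots> \<le> (real d - 1) * (real d - 1)" using a assms by (intro mult_mono) auto
    also have "\<dots> \<le> real d * (real d - 1)" using a assms by (intro mult_right_mono) auto
    finally show ?thesis .
  qed
  then show ?thesis unfolding lamp_def by simp
qed

definition cf :: "nat \<Rightarrow> nat \<Rightarrow> nat \<Rightarrow> real" where
  "cf m d k = (\<Prod>i\<in>{k..<d}. bet m (i+1) / (lamp i - lamp d))"

definition uu :: "nat \<Rightarrow> nat \<Rightarrow> real \<Rightarrow> real" where
  "uu m d x = (\<Sum>k<d. cf m d (k+1) * ff x (k+1))"

lemma cf_rec: assumes "k < d" "1 \<le> k"
  shows "cf m d k * (lamp k - lamp d) = cf m d (k+1) * bet m (k+1)"
proof -
  have ne: "lamp k - lamp d \<noteq> 0" using lamp_lt[of k d] assms by simp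
  have "cf m d k = bet m (k+1) / (lamp k - lamp d) * cf m d (Suc k)"
    unfolding cf_def using assms by (subst prod.atLeast_Suc_lessThan) auto
  then show ?thesis using ne by simp
qed

lemma cf_nonzero: assumes "d \<le> m" "1 \<le> k"
  shows "cf m d k \<noteq> 0"
proof -
  have "\<forall>i \<in> {k..<d}. bet m (i + 1) / (lamp i - lamp d) \<noteq> 0"
  proof
    fix i assume i: "i \<in> {k..<d}"
    have "lamp i < lamp d" using lamp_lt[of i d] i assms by auto
    moreover have "bet m (i+1) \<noteq> 0" using i assms unfolding bet_def by auto
    ultimately show "bet m (i + 1) / (lamp i - lamp d) \<noteq> 0" by simp
  qed
  then show ?thesis unfolding cf_def by (simp add: prod_zero_iff)
qed

lemma uu_eig: assumes "2 \<le> d" "d \<le> m"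
  shows "x * (real m - x) / 2 * (2 * uu m d x - uu m d (x - 1) - uu m d (x + 1)) = lamp d * uu m d x"
proof -
  obtain e where e: "d = Suc e" using assms by (cases d) auto
  let ?c = "cf m d"
  have "x * (real m - x) / 2 * (2 * uu m d x - uu m d (x - 1) - uu m d (x + 1))
     = (\<Sum>k<d. ?c (k+1) * (x * (real m - x) / 2 * (2 * ff x (k+1) - ff (x - 1) (k+1) - ff (x + 1) (k+1))))"
    unfolding uu_def by (simp add: sum_distrib_left sum_subtractf algebra_simps sum.distrib)
  also have "\<dots> = (\<Sum>k<d. ?c (k+1) * (lamp (k+1) * ff x (k+1) - bet m (k+1) * ff x k))"
    by (intro sum.cong refl, subst Tff) auto
  also have "\<dots> = (\<Sum>k<d. ?c (k+1) * (lamp (k+1) - lamp d) * ff x (k+1)) - (\<Sum>k<d. ?c (k+1) * bet m (k+1) * ff x k)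
       + lamp d * uu m d x"
    unfolding uu_def by (simp add: sum_distrib_left sum_subtractf algebra_simps flip: sum.distrib)
  also have "(\<Sum>k<d. ?c (k+1) * (lamp (k+1) - lamp d) * ff x (k+1)) = (\<Sum>k<e. ?c (k+1) * (lamp (k+1) - lamp d) * ff x (k+1))"
    unfolding e by simp
  also have "(\<Sum>k<d. ?c (k+1) * bet m (k+1) * ff x k) = (\<Sum>k<e. ?c (k+2) * bet m (k+2) * ff x (k+1))"
    unfolding e sum.lessThan_Suc_shift by (simp add: bet_def)
  also have "(\<Sum>k<e. ?c (k+1) * (lamp (k+1) - lamp d) * ff x (k+1)) = (\<Sum>k<e. ?c (k+2) * bet m (k+2) * ff x (k+1))"
    by (intro sum.cong refl, subst cf_rec) (auto simp: e)
  finally show ?thesis by simp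
qed

lemma uu_0: "uu m d 0 = 0"
  unfolding uu_def by (simp add: ff.simps)

lemma ff_0: "k > 0 \<Longrightarrow> ff 0 k = 0"
  by (cases k) (auto simp: ff.simps)

lemma uu_1: assumes "1 \<le> d" shows "uu m d 1 = cf m d 1"
proof -
  have "uu m d 1 = (\<Sum>k<d. if k = 0 then cf m d 1 else 0)"
    unfolding uu_def by (intro sum.cong refl) (auto simp: ff.simps ff_0)
  then show ?thesis using assms by simp
qed

lemma uu_m: assumes "2 \<le> d" "d \<le> m" shows "uu m d (real m) = 0"
proof -
  have "lamp d * uu m d (real m) = 0" using uu_eig[OF assms, of "real m"] by simp
  moreover have "lamp d > 0" using assms unfolding lamp_def by simp
  ultimately show ?thesis by simp
qed

lemma Amat_carrier[simp]: "Amat m \<in> carrier_mat (m - 1) (m - 1)"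
  unfolding Amat_def by simp

lemma Amat_dims[simp]: "dim_row (Amat m) = m - 1" "dim_col (Amat m) = m - 1"
  unfolding Amat_def by simp_all

lemma Amat_entry: "i < m - 1 \<Longrightarrow> j < m - 1 \<Longrightarrow>
   Amat m $$ (i, j) = (if i = j then 2 else if i = j + 1 \<or> j = i + 1 then -1 else 0)"
  unfolding Amat_def by simp

lemma Amat_mult:
  fixes f :: "nat \<Rightarrow> real"
  assumes z: "z \<in> carrier_vec (m - 1)" and i: "i < m - 1"
    and zf: "\<forall>j<m-1. z $ j = f (j+1)" and f0: "f 0 = 0" and fm: "f m = 0"
  shows "(Amat m *\<^sub>v z) $ i = 2 * f (i+1) - f i - f (i+2)"
proof -
  have "(Amat m *\<^sub>v z) $ i = (\<Sum>j\<in>{0..<m-1}. Amat m $$ (i, j) * z $ j)"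
    using z i by (simp add: mult_mat_vec_def scalar_prod_def row_def)
  also have "\<dots> = (\<Sum>j\<in>{0..<m-1}. (if j = i then 2 * f (i+1) else 0)
        + (if 0 < i \<and> j = i - 1 then - f i else 0) + (if j = i + 1 then - f (i+2) else 0))"
    using i zf by (intro sum.cong refl) (auto simp: Amat_entry)
  also have "\<dots> = 2 * f (i+1) + (if 0 < i then - f i else 0) + (if i + 1 < m - 1 then - f (i+2) else 0)"
    using i by (simp add: sum.distrib)
  also have "\<dots> = 2 * f (i+1) - f i - f (i+2)"
  proof -
    have "\<not> i + 1 < m - 1 \<Longrightarrow> i + 2 = m" using i by linarith
    then show ?thesis using f0 fm by (cases "i = 0") auto
  qed
  finally show ?thesis .
qed

lemma Amat_ker:
  assumes m: "m \<ge> 2" and z: "z \<in> carrier_vec (m - 1)" and Az: "Amat m *\<^sub>v z = 0\<^sub>v (m - 1)"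
  shows "z = 0\<^sub>v (m - 1)"
proof -
  define f where "f j = (if j = 0 \<or> j \<ge> m then 0 else z $ (j - 1))" for j
  have rec: "2 * f (i+1) - f i - f (i+2) = 0" if i: "i < m - 1" for i
  proof -
    have "(Amat m *\<^sub>v z) $ i = 2 * f (i+1) - f i - f (i+2)"
      by (rule Amat_mult[OF z i]) (auto simp: f_def)
    then show ?thesis using Az i by simp
  qed
  have P: "j + 1 \<le> m \<longrightarrow> f j = real j * f 1 \<and> f (j+1) = real (j+1) * f 1" for j
  proof (induction j)
    case 0 then show ?case by (simp add: f_def)
  next
    case (Suc j)
    show ?case
    proof
      assume j: "Suc j + 1 \<le> m"
      then have h: "f j = real j * f 1 \<and> f (j+1) = real (j+1) * f 1" using Suc by simp
      have "2 * f (j+1) - f j - f (j+2) = 0" using rec[of j] j by simp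
      then have "f (j+2) = real (j+2) * f 1" using h by (simp add: algebra_simps)
      then show "f (Suc j) = real (Suc j) * f 1 \<and> f (Suc j + 1) = real (Suc j + 1) * f 1"
        using h by simp
    qed
  qed
  have "f m = real m * f 1" using P[of "m - 1"] m by simp
  moreover have "f m = 0" by (simp add: f_def)
  ultimately have f1: "f 1 = 0" using m by simp
  show ?thesis
  proof (rule eq_vecI)
    fix j assume "j < dim_vec (0\<^sub>v (m - 1) :: real vec)"
    then have j: "j < m - 1" by simp
    have "z $ j = f (j+1)" using j by (simp add: f_def)
    also have "\<dots> = 0" using P[of "j+1"] j f1 by simp
    finally show "z $ j = 0\<^sub>v (m - 1) $ j" using j by simp
  qed (use z in simp)
qed

lemma Ainv_props:
  assumes m: "m \<ge> 2"
  shows "Ainv m \<in> carrier_mat (m - 1) (m - 1)" "Ainv m * Amat m = 1\<^sub>m (m - 1)"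
proof -
  have d: "det (Amat m) \<noteq> 0"
    using Amat_ker[OF m] det_0_iff_vec_prod_zero[OF Amat_carrier[of m]] by blast
  have "mat_inverse (Amat m) \<noteq> None"
  proof
    assume "mat_inverse (Amat m) = None"
    from mat_inverse(1)[OF Amat_carrier this, where b="()"] det_non_zero_imp_unit[OF Amat_carrier d, where b="()"]
    show False by blast
  qed
  then obtain B where B: "mat_inverse (Amat m) = Some B" by blast
  have Ai: "Ainv m = B" unfolding Ainv_def B by simp
  from mat_inverse(2)[OF Amat_carrier B]
  show "Ainv m \<in> carrier_mat (m - 1) (m - 1)" "Ainv m * Amat m = 1\<^sub>m (m - 1)" unfolding Ai by auto
qed

definition vf :: "nat \<Rightarrow> nat \<Rightarrow> real" where "vf m j = real j * (real m - real j) / 2"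

definition vv :: "nat \<Rightarrow> real vec" where "vv m = vec (m - 1) (\<lambda>j. vf m (j+1))"

lemma A_vv: "Amat m *\<^sub>v vv m = vec (m - 1) (\<lambda>_. 1)"
proof (rule eq_vecI)
  fix i assume "i < dim_vec (vec (m - 1) (\<lambda>_. 1 :: real))"
  then have i: "i < m - 1" by simp
  have "(Amat m *\<^sub>v vv m) $ i = 2 * vf m (i+1) - vf m i - vf m (i+2)"
    by (rule Amat_mult[OF _ i]) (auto simp: vv_def vf_def)
  also have "\<dots> = 1" unfolding vf_def by (simp add: field_simps)
  finally show "(Amat m *\<^sub>v vv m) $ i = vec (m - 1) (\<lambda>_. 1) $ i" using i by simp
qed simp

lemma Ainv_one: assumes m: "m \<ge> 2" shows "Ainv m *\<^sub>v vec (m - 1) (\<lambda>_. 1) = vv m"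
proof -
  have vc: "vv m \<in> carrier_vec (m - 1)" by (simp add: vv_def)
  have "Ainv m *\<^sub>v vec (m - 1) (\<lambda>_. 1) = Ainv m *\<^sub>v (Amat m *\<^sub>v vv m)" by (simp add: A_vv)
  also have "\<dots> = (Ainv m * Amat m) *\<^sub>v vv m"
    by (rule assoc_mult_mat_vec[symmetric]) (use Ainv_props[OF m] vc in auto)
  also have "\<dots> = vv m" using Ainv_props[OF m] vc by simp
  finally show ?thesis .
qed

lemma monic_roots_prod:
  fixes p :: "real poly"
  assumes "degree p = d" "coeff p d = 1" "inj_on \<omega> {1..d}" "\<forall>n\<in>{1..d}. poly p (\<omega> n) = 0"
  shows "p = (\<Prod>n = 1..d. [:- \<omega> n, 1:])"
  using assms
proof (induction d arbitrary: p)
  case 0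
  then show ?case using degree_0_id[of p] by (simp add: one_pCons)
next
  case (Suc d)
  let ?a = "\<omega> (Suc d)"
  have "poly p ?a = 0" using Suc.prems(4) by simp
  then obtain q where pq: "p = [:- ?a, 1:] * q" using poly_eq_0_iff_dvd by (metis dvdE)
  have p0: "p \<noteq> 0" using Suc.prems(2) by auto
  then have q0: "q \<noteq> 0" using pq by auto
  have "degree ([:- ?a, 1:] * q) = degree [:- ?a, 1:] + degree q" by (rule degree_mult_eq) (use q0 in auto)
  then have dq: "degree q = d" using Suc.prems(1) pq by simp
  have "lead_coeff p = lead_coeff q" by (simp only: pq lead_coeff_mult) simp
  then have cq: "coeff q d = 1" using Suc.prems(1,2) dq by simp
  have rq: "\<forall>n\<in>{1..d}. poly q (\<omega> n) = 0"
  proof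
    fix n assume n: "n \<in> {1..d}"
    have "\<omega> n \<noteq> ?a" using Suc.prems(3) n by (auto dest: inj_onD)
    moreover have "poly p (\<omega> n) = 0" using Suc.prems(4) n by auto
    ultimately show "poly q (\<omega> n) = 0" using pq by simp
  qed
  have iq: "inj_on \<omega> {1..d}" using Suc.prems(3) by (rule inj_on_subset) auto
  have "q = (\<Prod>n = 1..d. [:- \<omega> n, 1:])" using Suc.IH[OF dq cq iq rq] .
  then show ?case using pq by (simp add: mult.commute)
qed

lemma poly_char_poly_det:
  assumes M: "(M :: real mat) \<in> carrier_mat k k"
  shows "poly (char_poly M) \<mu> = det (mat k k (\<lambda>(i,j). (if i = j then \<mu> else 0) - M $$ (i,j)))"
proof -
  have "- char_matrix M \<mu> = mat k k (\<lambda>(i,j). (if i = j then \<mu> else 0) - M $$ (i,j))"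
    using M by (intro eq_matI) (auto simp: char_matrix_def)
  then show ?thesis using char_poly_matrix[OF M] by simp
qed

definition lam :: "nat \<Rightarrow> real" where "lam n = real n * (real n + 1) / 2"

definition Bm :: "nat \<Rightarrow> real mat" where
  "Bm m = mat (m - 1) (m - 1) (\<lambda>(i,j). Amat m $$ (i,j) * vf m (j+1))"

lemma Bm_carrier[simp]: "Bm m \<in> carrier_mat (m - 1) (m - 1)" unfolding Bm_def by simp

lemma Bm_root: assumes n: "1 \<le> n" "n \<le> m - 1"
  shows "poly (char_poly (Bm m)) (lam n) = 0"
proof -
  define d where "d = n + 1"
  have d: "2 \<le> d" "d \<le> m" using n unfolding d_def by auto
  have ld: "lamp d = lam n" unfolding lamp_def lam_def d_def by (simp add: algebra_simps)
  define y where "y = vec (m - 1) (\<lambda>j. uu m d (real (j+1)) / vf m (j+1))"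
  define z where "z = vec (m - 1) (\<lambda>j. uu m d (real (j+1)))"
  have vpos: "vf m (j+1) > 0" if "j < m - 1" for j using that unfolding vf_def by auto
  have "Bm m *\<^sub>v y = lamp d \<cdot>\<^sub>v y"
  proof (rule eq_vecI)
    fix i assume "i < dim_vec (lamp d \<cdot>\<^sub>v y)"
    then have i: "i < m - 1" by (simp add: y_def)
    have "(Bm m *\<^sub>v y) $ i = (\<Sum>j\<in>{0..<m-1}. Bm m $$ (i, j) * y $ j)"
      using i by (simp add: mult_mat_vec_def scalar_prod_def row_def Bm_def y_def)
    also have "\<dots> = (\<Sum>j\<in>{0..<m-1}. Amat m $$ (i, j) * z $ j)"
    proof (intro sum.cong refl)
      fix j assume "j \<in> {0..<m-1}"
      then have j: "j < m - 1" by simp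
      show "Bm m $$ (i, j) * y $ j = Amat m $$ (i, j) * z $ j"
        using vpos[OF j] i j by (simp add: Bm_def y_def z_def)
    qed
    also have "\<dots> = (Amat m *\<^sub>v z) $ i"
      using i by (simp add: mult_mat_vec_def scalar_prod_def row_def z_def)
    also have "\<dots> = 2 * uu m d (real (i+1)) - uu m d (real i) - uu m d (real (i+2))"
      by (rule Amat_mult[OF _ i, of _ "\<lambda>j. uu m d (real j)"]) (auto simp: z_def uu_0 uu_m[OF d])
    also have "\<dots> = lamp d * uu m d (real (i+1)) / vf m (i+1)"
    proof -
      have "real (i+1) * (real m - real (i+1)) / 2 *
          (2 * uu m d (real (i+1)) - uu m d (real (i+1) - 1) - uu m d (real (i+1) + 1)) = lamp d * uu m d (real (i+1))"
        by (rule uu_eig[OF d])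
      moreover have "real (i+1) - 1 = real i" "real (i+1) + 1 = real (i+2)" by simp_all
      ultimately have "vf m (i+1) * (2 * uu m d (real (i+1)) - uu m d (real i) - uu m d (real (i+2))) = lamp d * uu m d (real (i+1))"
        unfolding vf_def by simp
      then show ?thesis using vpos[OF i] by (simp add: field_simps)
    qed
    also have "\<dots> = (lamp d \<cdot>\<^sub>v y) $ i" using i by (simp add: y_def)
    finally show "(Bm m *\<^sub>v y) $ i = (lamp d \<cdot>\<^sub>v y) $ i" .
  qed (simp add: y_def Bm_def)
  moreover have "y \<noteq> 0\<^sub>v (m - 1)"
  proof
    assume "y = 0\<^sub>v (m - 1)"
    then have "y $ 0 = 0" using n by simp
    moreover have "y $ 0 = cf m d 1 / vf m 1" using n d by (simp add: y_def uu_1)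
    moreover have "cf m d 1 \<noteq> 0" using cf_nonzero d by simp
    moreover have "vf m 1 > 0" using vpos[of 0] n by simp
    ultimately show False by simp
  qed
  ultimately have "eigenvector (Bm m) y (lamp d)"
    unfolding eigenvector_def by (simp add: y_def Bm_def)
  then have "eigenvalue (Bm m) (lamp d)" unfolding eigenvalue_def by blast
  then show ?thesis using eigenvalue_root_char_poly[OF Bm_carrier] ld by simp
qed

lemma lam_inj: "inj_on lam {1..k}"
proof (rule inj_onI)
  have mono: "lam a < lam b" if "a < b" for a b
  proof -
    have "real a < real b" using that by simp
    then have "real a * (real a + 1) < real b * (real b + 1)"
      by (intro mult_strict_mono) auto
    then show ?thesis unfolding lam_def by simp
  qed
  fix a b assume ab: "a \<in> {1..k}" "b \<in> {1..k}" "lam a = lam b"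
  show "a = b"
  proof (rule ccontr)
    assume "a \<noteq> b"
    then have "a < b \<or> b < a" by auto
    then show False using mono[of a b] mono[of b a] ab(3) by auto
  qed
qed

lemma char_poly_Bm: "char_poly (Bm m) = (\<Prod>n = 1..m-1. [:- lam n, 1:])"
proof (rule monic_roots_prod)
  show "degree (char_poly (Bm m)) = m - 1" "coeff (char_poly (Bm m)) (m - 1) = 1"
    using degree_monic_char_poly[OF Bm_carrier[of m]] by auto
  show "inj_on lam {1..m-1}" by (rule lam_inj)
  show "\<forall>n\<in>{1..m - 1}. poly (char_poly (Bm m)) (lam n) = 0" using Bm_root by auto
qed

lemma prod_deriv_tendsto:
  fixes a :: "'i \<Rightarrow> real" and b :: "'e \<Rightarrow> 'i \<Rightarrow> real" and h :: "'e \<Rightarrow> real"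
  assumes S: "finite S" and h: "(h \<longlongrightarrow> 0) F" and hne: "\<forall>\<^sub>F e in F. h e \<noteq> 0"
    and b: "\<forall>i\<in>S. ((\<lambda>e. b e i) \<longlongrightarrow> \<beta> i) F"
  shows "((\<lambda>e. ((\<Prod>i\<in>S. a i + h e * b e i) - (\<Prod>i\<in>S. a i)) / h e)
          \<longlongrightarrow> (\<Sum>j\<in>S. \<beta> j * (\<Prod>i\<in>S-{j}. a i))) F"
  using S b
proof (induction S rule: finite_induct)
  case empty then show ?case by simp
next
  case (insert k S)
  let ?P = "\<lambda>e. \<Prod>i\<in>S. a i + h e * b e i"
  let ?A = "\<Prod>i\<in>S. a i"
  have IH: "((\<lambda>e. (?P e - ?A) / h e) \<longlongrightarrow> (\<Sum>j\<in>S. \<beta> j * (\<Prod>i\<in>S-{j}. a i))) F"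
    using insert by auto
  have PA: "(?P \<longlongrightarrow> ?A) F"
  proof -
    have "((\<lambda>e. \<Prod>i\<in>S. a i + h e * b e i) \<longlongrightarrow> (\<Prod>i\<in>S. a i + 0 * \<beta> i)) F"
      using insert.prems h by (intro tendsto_prod tendsto_add tendsto_mult tendsto_const) auto
    then show ?thesis by simp
  qed
  have bk: "((\<lambda>e. b e k) \<longlongrightarrow> \<beta> k) F" using insert.prems by auto
  have lim: "((\<lambda>e. b e k * ?P e + a k * ((?P e - ?A) / h e)) \<longlongrightarrow>
       \<beta> k * ?A + a k * (\<Sum>j\<in>S. \<beta> j * (\<Prod>i\<in>S-{j}. a i))) F"
    by (intro tendsto_add tendsto_mult tendsto_const bk PA IH)
  have eq: "(\<Sum>j\<in>insert k S. \<beta> j * (\<Prod>i\<in>insert k S-{j}. a i))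
      = \<beta> k * ?A + a k * (\<Sum>j\<in>S. \<beta> j * (\<Prod>i\<in>S-{j}. a i))"
  proof -
    have "(\<Sum>j\<in>S. \<beta> j * (\<Prod>i\<in>insert k S-{j}. a i)) = (\<Sum>j\<in>S. a k * (\<beta> j * (\<Prod>i\<in>S-{j}. a i)))"
    proof (intro sum.cong refl)
      fix j assume j: "j \<in> S"
      then have "insert k S - {j} = insert k (S - {j})" using insert.hyps by auto
      then show "\<beta> j * (\<Prod>i\<in>insert k S-{j}. a i) = a k * (\<beta> j * (\<Prod>i\<in>S-{j}. a i))"
        using insert.hyps by simp
    qed
    moreover have "insert k S - {k} = S" using insert.hyps by auto
    ultimately show ?thesis using insert.hyps by (simp add: sum_distrib_left)
  qed
  show ?case unfolding eq
  proof (rule Lim_transform_eventually[OF lim])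
    show "\<forall>\<^sub>F e in F. b e k * ?P e + a k * ((?P e - ?A) / h e) =
       ((\<Prod>i\<in>insert k S. a i + h e * b e i) - (\<Prod>i\<in>insert k S. a i)) / h e"
      using hne
    proof eventually_elim
      case (elim e)
      then show ?case using insert.hyps by (simp add: field_simps)
    qed
  qed
qed

lemma det_mat_formula:
  "det (mat k k (\<lambda>(i,j). f i j)) = (\<Sum>p | p permutes {0..<k}. signof p * (\<Prod>i=0..<k. f i (p i)))"
proof -
  have "det (mat k k (\<lambda>(i,j). f i j)) = (\<Sum>p | p permutes {0..<k}. signof p * (\<Prod>i=0..<k. mat k k (\<lambda>(i,j). f i j) $$ (i, p i)))"
    by (rule det_def') simp
  also have "\<dots> = (\<Sum>p | p permutes {0..<k}. signof p * (\<Prod>i=0..<k. f i (p i)))"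
  proof (intro sum.cong refl arg_cong2[where f = "(*)"] prod.cong)
    fix p i assume "p \<in> {p. p permutes {0..<k}}" "i \<in> {0..<k}"
    then have "p i < k" "i < k" by (auto simp: permutes_in_image)
    then show "mat k k (\<lambda>(i,j). f i j) $$ (i, p i) = f i (p i)" by simp
  qed
  finally show ?thesis .
qed

definition idm :: "nat \<Rightarrow> nat \<Rightarrow> real" where "idm i j = (if i = j then 1 else 0)"

definition Dfun :: "nat \<Rightarrow> (nat \<Rightarrow> nat \<Rightarrow> real) \<Rightarrow> (nat \<Rightarrow> nat \<Rightarrow> real) \<Rightarrow> real" where
  "Dfun k a \<beta> = (\<Sum>p | p permutes {0..<k}. signof p * (\<Sum>j\<in>{0..<k}. \<beta> j (p j) * (\<Prod>i\<in>{0..<k}-{j}. a i (p i))))"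

lemma Dfun_lin: "Dfun k a (\<lambda>i j. t * idm i j - g i j) = t * Dfun k a idm - Dfun k a g"
  unfolding Dfun_def
  by (simp add: sum_subtractf sum_distrib_left algebra_simps flip: sum.distrib)

lemma det_deriv_tendsto:
  fixes b :: "'e \<Rightarrow> nat \<Rightarrow> nat \<Rightarrow> real"
  assumes h: "(h \<longlongrightarrow> 0) F" and hne: "\<forall>\<^sub>F e in F. h e \<noteq> 0"
    and b: "\<forall>i<k. \<forall>j<k. ((\<lambda>e. b e i j) \<longlongrightarrow> \<beta> i j) F"
  shows "((\<lambda>e. (det (mat k k (\<lambda>(i,j). a i j + h e * b e i j)) - det (mat k k (\<lambda>(i,j). a i j))) / h e)
          \<longlongrightarrow> Dfun k a \<beta>) F"
proof -
  have eq: "(det (mat k k (\<lambda>(i,j). a i j + h e * b e i j)) - det (mat k k (\<lambda>(i,j). a i j))) / h e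
     = (\<Sum>p | p permutes {0..<k}. signof p * (((\<Prod>i\<in>{0..<k}. a i (p i) + h e * b e i (p i)) - (\<Prod>i\<in>{0..<k}. a i (p i))) / h e))"
    for e
  proof -
    let ?X = "\<lambda>p. signof p * (\<Prod>i\<in>{0..<k}. a i (p i) + h e * b e i (p i)) :: real"
    let ?Y = "\<lambda>p. signof p * (\<Prod>i\<in>{0..<k}. a i (p i)) :: real"
    have "(\<Sum>p | p permutes {0..<k}. signof p * (((\<Prod>i\<in>{0..<k}. a i (p i) + h e * b e i (p i)) - (\<Prod>i\<in>{0..<k}. a i (p i))) / h e))
       = (\<Sum>p | p permutes {0..<k}. (?X p - ?Y p) / h e)"
      by (intro sum.cong refl) (simp add: right_diff_distrib)
    also have "\<dots> = (\<Sum>p | p permutes {0..<k}. ?X p - ?Y p) / h e" by (rule sum_divide_distrib[symmetric])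
    also have "\<dots> = ((\<Sum>p | p permutes {0..<k}. ?X p) - (\<Sum>p | p permutes {0..<k}. ?Y p)) / h e"
      by (simp only: sum_subtractf)
    finally show ?thesis unfolding det_mat_formula by simp
  qed
  show ?thesis unfolding eq Dfun_def
  proof (intro tendsto_sum tendsto_mult_left)
    fix p assume "p \<in> {p. p permutes {0..<k}}"
    then have pk: "\<forall>i\<in>{0..<k}. p i < k" by (auto simp: permutes_in_image)
    show "((\<lambda>e. ((\<Prod>i\<in>{0..<k}. a i (p i) + h e * b e i (p i)) - (\<Prod>i\<in>{0..<k}. a i (p i))) / h e)
         \<longlongrightarrow> (\<Sum>j\<in>{0..<k}. \<beta> j (p j) * (\<Prod>i\<in>{0..<k}-{j}. a i (p i)))) F"
      by (rule prod_deriv_tendsto[OF _ h hne, where b = "\<lambda>e i. b e i (p i)" and \<beta> = "\<lambda>i. \<beta> i (p i)"])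
         (use b pk in auto)
  qed
qed

definition aN :: "nat \<Rightarrow> nat \<Rightarrow> nat \<Rightarrow> nat \<Rightarrow> real" where
  "aN m n i j = lam n * idm i j - Bm m $$ (i,j)"

lemma det_aN: "det (mat (m-1) (m-1) (\<lambda>(i,j). aN m n i j + h * idm i j)) = poly (char_poly (Bm m)) (lam n + h)"
proof -
  have "mat (m-1) (m-1) (\<lambda>(i,j). aN m n i j + h * idm i j)
      = mat (m-1) (m-1) (\<lambda>(i,j). (if i = j then lam n + h else 0) - Bm m $$ (i,j))"
    by (rule eq_matI) (auto simp: aN_def idm_def)
  then show ?thesis using poly_char_poly_det[OF Bm_carrier] by simp
qed

lemma det_aN0: "det (mat (m-1) (m-1) (\<lambda>(i,j). aN m n i j)) = poly (char_poly (Bm m)) (lam n)"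
  using det_aN[of m n 0] by simp

lemma Dfun_nonzero: assumes n: "1 \<le> n" "n \<le> m - 1"
  shows "Dfun (m-1) (aN m n) idm \<noteq> 0"
proof -
  let ?S = "{1..m-1}"
  let ?P = "\<lambda>\<mu>. poly (char_poly (Bm m)) \<mu>"
  have P: "?P \<mu> = (\<Prod>n'\<in>?S. \<mu> - lam n')" for \<mu>
    unfolding char_poly_Bm by (simp add: poly_prod)
  have nS: "n \<in> ?S" using n by simp
  have hne: "\<forall>\<^sub>F h in at (0::real). h \<noteq> 0" by (simp add: eventually_at_filter)
  have L1: "((\<lambda>h. (?P (lam n + h) - ?P (lam n)) / h) \<longlongrightarrow> Dfun (m-1) (aN m n) idm) (at 0)"
    using det_deriv_tendsto[OF tendsto_ident_at hne, of "m-1" "\<lambda>e i j. idm i j" idm "aN m n"]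
    unfolding det_aN det_aN0 by simp
  have P0: "?P (lam n) = 0" using Bm_root n by simp
  have L2a: "((\<lambda>h. \<Prod>n'\<in>?S-{n}. lam n + h - lam n') \<longlongrightarrow> (\<Prod>n'\<in>?S-{n}. lam n + 0 - lam n')) (at 0)"
    by (intro tendsto_prod tendsto_diff tendsto_add tendsto_const tendsto_ident_at)
  then have L2: "((\<lambda>h. \<Prod>n'\<in>?S-{n}. lam n + h - lam n') \<longlongrightarrow> (\<Prod>n'\<in>?S-{n}. lam n - lam n')) (at 0)"
    by simp
  have L2': "((\<lambda>h. (?P (lam n + h) - ?P (lam n)) / h) \<longlongrightarrow> (\<Prod>n'\<in>?S-{n}. lam n - lam n')) (at 0)"
  proof (rule Lim_transform_eventually[OF L2])
    show "\<forall>\<^sub>F h in at 0. (\<Prod>n'\<in>?S-{n}. lam n + h - lam n') = (?P (lam n + h) - ?P (lam n)) / h"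
      using hne
    proof eventually_elim
      case (elim h)
      have "?P (lam n + h) = h * (\<Prod>n'\<in>?S-{n}. lam n + h - lam n')"
        unfolding P by (subst prod.remove[OF _ nS]) auto
      then show ?case using elim P0 by simp
    qed
  qed
  have "Dfun (m-1) (aN m n) idm = (\<Prod>n'\<in>?S-{n}. lam n - lam n')"
    using tendsto_unique[OF _ L1 L2'] by simp
  also have "\<dots> \<noteq> 0"
  proof -
    have "\<forall>n'\<in>?S-{n}. lam n - lam n' \<noteq> 0"
      using lam_inj[of "m-1"] nS by (auto dest: inj_onD)
    then show ?thesis by (simp add: prod_zero_iff)
  qed
  finally show ?thesis .
qed

definition Phi :: "nat \<Rightarrow> real \<Rightarrow> (nat \<Rightarrow> nat \<Rightarrow> real) \<Rightarrow> real \<Rightarrow> real" where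
  "Phi m h g \<mu> = det (mat (m-1) (m-1) (\<lambda>(i,j). (if i = j then \<mu> else 0) - Bm m $$ (i,j) - h * g i j))"

lemma Phi_poly: "Phi m h g \<mu> = poly (char_poly (mat (m-1) (m-1) (\<lambda>(i,j). Bm m $$ (i,j) + h * g i j))) \<mu>"
proof -
  have "mat (m-1) (m-1) (\<lambda>(i,j). (if i = j then \<mu> else 0) - Bm m $$ (i,j) - h * g i j)
     = mat (m-1) (m-1) (\<lambda>(i,j). (if i = j then \<mu> else 0) - mat (m-1) (m-1) (\<lambda>(i,j). Bm m $$ (i,j) + h * g i j) $$ (i,j))"
    by (rule eq_matI) auto
  then show ?thesis unfolding Phi_def by (subst poly_char_poly_det[of _ "m-1"]) auto
qed

lemma Phi_cont: "continuous_on A (Phi m h g)"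
  unfolding Phi_poly[abs_def] by (intro continuous_on_poly continuous_on_id)

lemma Phi_aN: "Phi m h g (lam n + t * h) = det (mat (m-1) (m-1) (\<lambda>(i,j). aN m n i j + h * (t * idm i j - g i j)))"
  unfolding Phi_def by (rule arg_cong[where f = det], rule eq_matI) (auto simp: aN_def idm_def algebra_simps)

lemma root_near:
  fixes h :: "'e \<Rightarrow> real" and g :: "'e \<Rightarrow> nat \<Rightarrow> nat \<Rightarrow> real"
  assumes n: "1 \<le> n" "n \<le> m - 1"
    and h: "(h \<longlongrightarrow> 0) F" and hpos: "\<forall>\<^sub>F e in F. h e > 0"
    and g: "\<forall>i<m-1. \<forall>j<m-1. ((\<lambda>e. g e i j) \<longlongrightarrow> g0 i j) F"
  shows "\<exists>K. \<forall>\<^sub>F e in F. \<exists>\<mu>. \<bar>\<mu> - lam n\<bar> \<le> K * h e \<and> Phi m (h e) (g e) \<mu> = 0"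
proof -
  define D1 where "D1 = Dfun (m-1) (aN m n) idm"
  define D0 where "D0 = Dfun (m-1) (aN m n) g0"
  have D1: "D1 \<noteq> 0" unfolding D1_def by (rule Dfun_nonzero[OF n])
  define K where "K = (\<bar>D0\<bar> + 1) / \<bar>D1\<bar>"
  have KD: "K * \<bar>D1\<bar> = \<bar>D0\<bar> + 1" unfolding K_def using D1 by simp
  have Kpos: "K > 0" unfolding K_def using D1 by (simp add: add_nonneg_pos)
  have hne: "\<forall>\<^sub>F e in F. h e \<noteq> 0" using hpos by eventually_elim simp
  have a0: "det (mat (m-1) (m-1) (\<lambda>(i,j). aN m n i j)) = 0" unfolding det_aN0 using Bm_root n by simp
  have lim: "((\<lambda>e. Phi m (h e) (g e) (lam n + t * h e) / h e) \<longlongrightarrow> t * D1 - D0) F" for t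
  proof -
    have "((\<lambda>e. (det (mat (m-1) (m-1) (\<lambda>(i,j). aN m n i j + h e * (t * idm i j - g e i j)))
            - det (mat (m-1) (m-1) (\<lambda>(i,j). aN m n i j))) / h e)
          \<longlongrightarrow> Dfun (m-1) (aN m n) (\<lambda>i j. t * idm i j - g0 i j)) F"
      by (rule det_deriv_tendsto[OF h hne]) (use g in \<open>auto intro!: tendsto_diff tendsto_const\<close>)
    then show ?thesis unfolding a0 Phi_aN Dfun_lin D1_def D0_def by simp
  qed
  have prod_neg: "(K * D1 - D0) * ((-K) * D1 - D0) < 0"
  proof -
    have "(K * D1 - D0) * ((-K) * D1 - D0) = D0 ^ 2 - (K * \<bar>D1\<bar>) ^ 2"
      by (simp add: algebra_simps power2_eq_square abs_mult_self_eq)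
    also have "\<dots> = D0^2 - (\<bar>D0\<bar> + 1)^2" using KD by simp
    also have "\<dots> < 0" by (simp add: power2_eq_square algebra_simps)
    finally show ?thesis .
  qed
  have "((\<lambda>e. Phi m (h e) (g e) (lam n + K * h e) / h e * (Phi m (h e) (g e) (lam n + (-K) * h e) / h e))
      \<longlongrightarrow> (K * D1 - D0) * ((-K) * D1 - D0)) F"
    by (intro tendsto_mult lim)
  then have ev: "\<forall>\<^sub>F e in F. Phi m (h e) (g e) (lam n + K * h e) / h e * (Phi m (h e) (g e) (lam n + (-K) * h e) / h e) < 0"
    using prod_neg by (rule order_tendstoD)
  have "\<forall>\<^sub>F e in F. \<exists>\<mu>. \<bar>\<mu> - lam n\<bar> \<le> K * h e \<and> Phi m (h e) (g e) \<mu> = 0"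
    using ev hpos
  proof eventually_elim
    case (elim e)
    let ?f = "Phi m (h e) (g e)"
    let ?a = "lam n - K * h e" and ?b = "lam n + K * h e"
    have ab: "?a \<le> ?b" using elim Kpos by simp
    have "?f ?b * ?f ?a < 0"
    proof -
      have "?f ?b / h e * (?f ?a / h e) < 0" using elim(1) by simp
      then have "(?f ?b * ?f ?a) / (h e * h e) < 0" by simp
      then show ?thesis using elim(2) by (simp add: divide_less_0_iff)
    qed
    then have "(?f ?a \<le> 0 \<and> 0 \<le> ?f ?b) \<or> (?f ?b \<le> 0 \<and> 0 \<le> ?f ?a)"
      by (smt (verit) mult_nonneg_nonneg mult_nonpos_nonpos)
    then obtain \<mu> where mu: "?a \<le> \<mu>" "\<mu> \<le> ?b" "?f \<mu> = 0"
      using IVT'[of ?f ?a 0 ?b] IVT2'[of ?f ?b 0 ?a] ab Phi_cont by blast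
    then show ?case by (intro exI[of _ \<mu>]) auto
  qed
  then show ?thesis by blast
qed

definition LL :: "real \<Rightarrow> real" where "LL \<epsilon> = - 2 * ln \<epsilon> - ln \<bar>ln \<epsilon>\<bar> + 2 * ln 2"

lemma LL_top: "filterlim LL at_top (at_right 0)"
proof -
  have a: "filterlim (\<lambda>x. - ln x) at_top (at_right (0::real))"
    using ln_at_0 filterlim_uminus_at_top[of "\<lambda>x. - ln x"] by simp
  have "\<forall>\<^sub>F x in at_right (0::real). - ln x \<le> LL x"
    unfolding eventually_at_right_field
  proof (intro exI[of _ 1] conjI allI impI)
    fix x :: real assume x: "0 < x" "x < 1"
    then have u: "- ln x > 0" by simp
    then have ab: "\<bar>ln x\<bar> = - ln x" by simp
    have "ln (- ln x) \<le> - ln x - 1" using ln_le_minus_one[OF u] .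
    moreover have "ln (2::real) > 0" by simp
    ultimately show "- ln x \<le> LL x" unfolding LL_def ab by linarith
  qed simp
  then show ?thesis by (rule filterlim_at_top_mono[OF a])
qed

lemma lam_sep: assumes "a < b" shows "lam a + 1 \<le> lam b"
proof -
  have ab: "real a + 1 \<le> real b" using assms by linarith
  have "(real a + 1) * (real a + 2) \<le> real b * (real b + 1)"
    using ab by (intro mult_mono) auto
  then have h2: "real a * real a + real a + 2 \<le> real b * real b + real b"
    by (simp add: algebra_simps)
  have "lam b - lam a - 1 = ((real b * real b + real b) - (real a * real a + real a + 2)) / 2"
    unfolding lam_def by (simp add: field_simps)
  also have "\<dots> \<ge> 0" using h2 by simp
  finally show ?thesis by simp
qed

theorem lemma6:
  fixes m :: nat and x :: "real \<Rightarrow> real vec"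
  assumes m: "m \<ge> 2"
    and dim: "\<forall>\<^sub>F \<epsilon> in at_right 0. x \<epsilon> \<in> carrier_vec (m - 1)"
    and eqn: "\<forall>\<^sub>F \<epsilon> in at_right 0. \<forall>j < m - 1.
               exp (- (x \<epsilon> $ j)) = \<epsilon>\<^sup>2 / 8 * ((Ainv m *\<^sub>v x \<epsilon>) $ j)"
    and asym: "\<forall>j < m - 1. ((\<lambda>\<epsilon>. x \<epsilon> $ j -
               (- 2 * ln \<epsilon> - ln \<bar>ln \<epsilon>\<bar> + 2 * ln 2
                - ln ((Ainv m *\<^sub>v vec (m - 1) (\<lambda>_. 1)) $ j))) \<longlongrightarrow> 0) (at_right 0)"
  shows "\<exists>C. \<forall>\<^sub>F \<epsilon> in at_right 0. \<exists>\<omega> :: nat \<Rightarrow> real.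
           char_poly (eig_mat m (Ainv m *\<^sub>v x \<epsilon>)) = (\<Prod>n = 1..m - 1. [:- \<omega> n, 1:]) \<and>
           (\<forall>n \<in> {1..m - 1}. \<bar>\<omega> n - (2 + (- 4 * ln \<epsilon> - 2 * ln \<bar>ln \<epsilon>\<bar> + 4 * ln 2)
                                         * (real n * (real n + 1) / 2))\<bar> \<le> C)"
proof -
  define M where "M \<epsilon> = eig_mat m (Ainv m *\<^sub>v x \<epsilon>)" for \<epsilon>
  define T where "T n \<epsilon> = 2 + (- 4 * ln \<epsilon> - 2 * ln \<bar>ln \<epsilon>\<bar> + 4 * ln 2) * (real n * (real n + 1) / 2)"
    for n :: nat and \<epsilon> :: real
  have T_eq: "T n \<epsilon> = 2 + 2 * LL \<epsilon> * lam n" for n \<epsilon>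
    unfolding T_def LL_def lam_def by (simp add: algebra_simps)
  have Mc: "M \<epsilon> \<in> carrier_mat (m-1) (m-1)" for \<epsilon> by (simp add: M_def eig_mat_def)
  define h where "h \<epsilon> = inverse (LL \<epsilon>)" for \<epsilon>
  have htend: "(h \<longlongrightarrow> 0) (at_right 0)" unfolding h_def[abs_def] by (rule tendsto_inverse_0_at_top[OF LL_top])
  have Lpos: "\<forall>\<^sub>F \<epsilon> in at_right 0. LL \<epsilon> > 0" using LL_top unfolding filterlim_at_top_dense by blast
  have hpos: "\<forall>\<^sub>F \<epsilon> in at_right 0. h \<epsilon> > 0" using Lpos by eventually_elim (simp add: h_def)
  define rr where "rr \<epsilon> j = (\<Sum>k\<in>{0..<m-1}. Ainv m $$ (j,k) * (x \<epsilon> $ k - LL \<epsilon>))" for \<epsilon> j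
  define r0 where "r0 j = (\<Sum>k\<in>{0..<m-1}. Ainv m $$ (j,k) * (- ln (vf m (k+1))))" for j
  have Ac: "Ainv m \<in> carrier_mat (m-1) (m-1)" using Ainv_props[OF m] by simp
  have vone: "(Ainv m *\<^sub>v vec (m-1) (\<lambda>_. 1)) $ k = vf m (k+1)" if "k < m - 1" for k
    unfolding Ainv_one[OF m] vv_def using that by simp
  have xk: "((\<lambda>\<epsilon>. x \<epsilon> $ k - LL \<epsilon>) \<longlongrightarrow> - ln (vf m (k+1))) (at_right 0)" if k: "k < m - 1" for k
  proof -
    have "((\<lambda>\<epsilon>. x \<epsilon> $ k - (LL \<epsilon> - ln (vf m (k+1)))) \<longlongrightarrow> 0) (at_right 0)"
      using asym[rule_format, OF k] unfolding vone[OF k] LL_def by simp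
    then have "((\<lambda>\<epsilon>. x \<epsilon> $ k - (LL \<epsilon> - ln (vf m (k+1))) + (- ln (vf m (k+1)))) \<longlongrightarrow> 0 + (- ln (vf m (k+1)))) (at_right 0)"
      by (intro tendsto_add tendsto_const)
    then show ?thesis by simp
  qed
  have rrt: "((\<lambda>\<epsilon>. rr \<epsilon> j) \<longlongrightarrow> r0 j) (at_right 0)" for j
    unfolding rr_def r0_def by (intro tendsto_sum tendsto_mult_left xk) auto
  define g where "g \<epsilon> i j = Amat m $$ (i,j) * rr \<epsilon> j" for \<epsilon> i j
  have gt: "\<forall>i<m-1. \<forall>j<m-1. ((\<lambda>\<epsilon>. g \<epsilon> i j) \<longlongrightarrow> Amat m $$ (i,j) * r0 j) (at_right 0)"
    unfolding g_def by (auto intro!: tendsto_mult_left rrt)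
  have wdec: "\<forall>\<^sub>F \<epsilon> in at_right 0. \<forall>j<m-1. (Ainv m *\<^sub>v x \<epsilon>) $ j = LL \<epsilon> * vf m (j+1) + rr \<epsilon> j"
    using dim
  proof eventually_elim
    case (elim \<epsilon>)
    show ?case
    proof (intro allI impI)
      fix j assume j: "j < m - 1"
      have "(Ainv m *\<^sub>v x \<epsilon>) $ j = (\<Sum>k\<in>{0..<m-1}. Ainv m $$ (j,k) * x \<epsilon> $ k)"
        using j Ac elim by (simp add: mult_mat_vec_def scalar_prod_def row_def)
      moreover have "vf m (j+1) = (\<Sum>k\<in>{0..<m-1}. Ainv m $$ (j,k))"
        using vone[OF j] j Ac by (simp add: mult_mat_vec_def scalar_prod_def row_def)
      ultimately show "(Ainv m *\<^sub>v x \<epsilon>) $ j = LL \<epsilon> * vf m (j+1) + rr \<epsilon> j"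
        unfolding rr_def by (simp add: sum_distrib_left sum_subtractf right_diff_distrib algebra_simps)
    qed
  qed
  have polyM: "\<forall>\<^sub>F \<epsilon> in at_right 0. \<forall>\<mu>. poly (char_poly (M \<epsilon>)) (2 + 2 * LL \<epsilon> * \<mu>)
        = (2 * LL \<epsilon>) ^ (m-1) * Phi m (h \<epsilon>) (g \<epsilon>) \<mu>"
    using wdec Lpos
  proof eventually_elim
    case (elim \<epsilon>)
    show ?case
    proof
      fix \<mu>
      let ?L = "LL \<epsilon>"
      have "mat (m-1) (m-1) (\<lambda>(i,j). (if i = j then 2 + 2 * ?L * \<mu> else 0) - M \<epsilon> $$ (i,j))
        = (2 * ?L) \<cdot>\<^sub>m mat (m-1) (m-1) (\<lambda>(i,j). (if i = j then \<mu> else 0) - Bm m $$ (i,j) - h \<epsilon> * g \<epsilon> i j)"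
      proof (rule eq_matI)
        fix i j assume "i < dim_row ((2 * ?L) \<cdot>\<^sub>m mat (m-1) (m-1) (\<lambda>(i,j). (if i = j then \<mu> else 0) - Bm m $$ (i,j) - h \<epsilon> * g \<epsilon> i j))"
          "j < dim_col ((2 * ?L) \<cdot>\<^sub>m mat (m-1) (m-1) (\<lambda>(i,j). (if i = j then \<mu> else 0) - Bm m $$ (i,j) - h \<epsilon> * g \<epsilon> i j))"
        then have ij: "i < m - 1" "j < m - 1" by auto
        show "mat (m-1) (m-1) (\<lambda>(i,j). (if i = j then 2 + 2 * ?L * \<mu> else 0) - M \<epsilon> $$ (i,j)) $$ (i,j)
          = ((2 * ?L) \<cdot>\<^sub>m mat (m-1) (m-1) (\<lambda>(i,j). (if i = j then \<mu> else 0) - Bm m $$ (i,j) - h \<epsilon> * g \<epsilon> i j)) $$ (i,j)"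
        proof -
          have w: "(Ainv m *\<^sub>v x \<epsilon>) $ j = ?L * vf m (j+1) + rr \<epsilon> j" using elim(1) ij by blast
          have l: "mat (m-1) (m-1) (\<lambda>(i,j). (if i = j then 2 + 2 * ?L * \<mu> else 0) - M \<epsilon> $$ (i,j)) $$ (i,j)
              = (if i = j then 2 * ?L * \<mu> else 0) - 2 * Amat m $$ (i,j) * (?L * vf m (j+1) + rr \<epsilon> j)"
            using ij unfolding w[symmetric] by (simp add: M_def eig_mat_def)
          have r: "((2 * ?L) \<cdot>\<^sub>m mat (m-1) (m-1) (\<lambda>(i,j). (if i = j then \<mu> else 0) - Bm m $$ (i,j) - h \<epsilon> * g \<epsilon> i j)) $$ (i,j)
              = 2 * ?L * ((if i = j then \<mu> else 0) - Amat m $$ (i,j) * vf m (j+1) - inverse ?L * (Amat m $$ (i,j) * rr \<epsilon> j))"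
            using ij by (simp add: Bm_def g_def h_def)
          have "2 * ?L * (inverse ?L * (Amat m $$ (i,j) * rr \<epsilon> j)) = 2 * (Amat m $$ (i,j) * rr \<epsilon> j)"
            using elim(2) by simp
          moreover have "?L \<noteq> 0" using elim(2) by simp
          ultimately show ?thesis unfolding l r by (simp add: right_diff_distrib distrib_left)
        qed
      qed auto
      then show "poly (char_poly (M \<epsilon>)) (2 + 2 * ?L * \<mu>) = (2 * ?L) ^ (m-1) * Phi m (h \<epsilon>) (g \<epsilon>) \<mu>"
        unfolding poly_char_poly_det[OF Mc] Phi_def by simp
    qed
  qed
  have perN: "\<exists>K. \<forall>\<^sub>F \<epsilon> in at_right 0. \<exists>\<omega>. poly (char_poly (M \<epsilon>)) \<omega> = 0 \<and> \<bar>\<omega> - T n \<epsilon>\<bar> \<le> K"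
    if n: "n \<in> {1..m-1}" for n
  proof -
    obtain K where K: "\<forall>\<^sub>F \<epsilon> in at_right 0. \<exists>\<mu>. \<bar>\<mu> - lam n\<bar> \<le> K * h \<epsilon> \<and> Phi m (h \<epsilon>) (g \<epsilon>) \<mu> = 0"
      using root_near[of n m h "at_right 0" g "\<lambda>i j. Amat m $$ (i,j) * r0 j", OF _ _ htend hpos gt] n by auto
    have "\<forall>\<^sub>F \<epsilon> in at_right 0. \<exists>\<omega>. poly (char_poly (M \<epsilon>)) \<omega> = 0 \<and> \<bar>\<omega> - T n \<epsilon>\<bar> \<le> 2 * K"
      using K polyM Lpos
    proof eventually_elim
      case (elim \<epsilon>)
      then obtain \<mu> where mu: "\<bar>\<mu> - lam n\<bar> \<le> K * h \<epsilon>" "Phi m (h \<epsilon>) (g \<epsilon>) \<mu> = 0" by blast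
      have "poly (char_poly (M \<epsilon>)) (2 + 2 * LL \<epsilon> * \<mu>) = 0" using elim(2) mu(2) by simp
      moreover have "\<bar>(2 + 2 * LL \<epsilon> * \<mu>) - T n \<epsilon>\<bar> \<le> 2 * K"
      proof -
        have "\<bar>(2 + 2 * LL \<epsilon> * \<mu>) - T n \<epsilon>\<bar> = 2 * LL \<epsilon> * \<bar>\<mu> - lam n\<bar>"
          unfolding T_eq using elim(3) by (simp add: abs_mult right_diff_distrib[symmetric])
        also have "\<dots> \<le> 2 * LL \<epsilon> * (K * h \<epsilon>)" using mu(1) elim(3) by simp
        also have "\<dots> = 2 * K" using elim(3) by (simp add: h_def)
        finally show ?thesis .
      qed
      ultimately show ?case by blast
    qed
    then show ?thesis by blast
  qed
  have "\<forall>n\<in>{1..m-1}. \<exists>K. \<forall>\<^sub>F \<epsilon> in at_right 0. \<exists>\<omega>. poly (char_poly (M \<epsilon>)) \<omega> = 0 \<and> \<bar>\<omega> - T n \<epsilon>\<bar> \<le> K"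
    using perN by blast
  from bchoice[OF this] obtain Kf where Kf: "\<forall>n\<in>{1..m-1}. \<forall>\<^sub>F \<epsilon> in at_right 0. \<exists>\<omega>. poly (char_poly (M \<epsilon>)) \<omega> = 0 \<and> \<bar>\<omega> - T n \<epsilon>\<bar> \<le> Kf n"
    by blast
  define C where "C = (\<Sum>n\<in>{1..m-1}. \<bar>Kf n\<bar>)"
  have KC: "Kf n \<le> C" if "n \<in> {1..m-1}" for n
  proof -
    have "\<bar>Kf n\<bar> \<le> C" unfolding C_def using that by (intro member_le_sum) auto
    then show ?thesis by simp
  qed
  have allN: "\<forall>\<^sub>F \<epsilon> in at_right 0. \<forall>n\<in>{1..m-1}. \<exists>\<omega>. poly (char_poly (M \<epsilon>)) \<omega> = 0 \<and> \<bar>\<omega> - T n \<epsilon>\<bar> \<le> C"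
  proof (rule eventually_ball_finite)
    show "\<forall>n\<in>{1..m-1}. \<forall>\<^sub>F \<epsilon> in at_right 0. \<exists>\<omega>. poly (char_poly (M \<epsilon>)) \<omega> = 0 \<and> \<bar>\<omega> - T n \<epsilon>\<bar> \<le> C"
    proof
      fix n assume n: "n \<in> {1..m-1}"
      have "\<forall>\<^sub>F \<epsilon> in at_right 0. \<exists>\<omega>. poly (char_poly (M \<epsilon>)) \<omega> = 0 \<and> \<bar>\<omega> - T n \<epsilon>\<bar> \<le> Kf n"
        using Kf n by blast
      then show "\<forall>\<^sub>F \<epsilon> in at_right 0. \<exists>\<omega>. poly (char_poly (M \<epsilon>)) \<omega> = 0 \<and> \<bar>\<omega> - T n \<epsilon>\<bar> \<le> C"
      proof (rule eventually_mono)
        fix \<epsilon> assume "\<exists>\<omega>. poly (char_poly (M \<epsilon>)) \<omega> = 0 \<and> \<bar>\<omega> - T n \<epsilon>\<bar> \<le> Kf n"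
        then obtain \<omega> where "poly (char_poly (M \<epsilon>)) \<omega> = 0" "\<bar>\<omega> - T n \<epsilon>\<bar> \<le> Kf n" by blast
        then show "\<exists>\<omega>. poly (char_poly (M \<epsilon>)) \<omega> = 0 \<and> \<bar>\<omega> - T n \<epsilon>\<bar> \<le> C"
          using KC[OF n] by force
      qed
    qed
  qed simp
  have LC: "\<forall>\<^sub>F \<epsilon> in at_right 0. LL \<epsilon> > C" using LL_top unfolding filterlim_at_top_dense by blast
  have "\<forall>\<^sub>F \<epsilon> in at_right 0. \<exists>\<omega> :: nat \<Rightarrow> real.
           char_poly (M \<epsilon>) = (\<Prod>n = 1..m - 1. [:- \<omega> n, 1:]) \<and> (\<forall>n \<in> {1..m - 1}. \<bar>\<omega> n - T n \<epsilon>\<bar> \<le> C)"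
    using allN LC Lpos
  proof eventually_elim
    case (elim \<epsilon>)
    from bchoice[OF elim(1)] obtain \<omega> where om: "\<forall>n\<in>{1..m-1}. poly (char_poly (M \<epsilon>)) (\<omega> n) = 0 \<and> \<bar>\<omega> n - T n \<epsilon>\<bar> \<le> C"
      by blast
    have inj: "inj_on \<omega> {1..m-1}"
    proof (rule inj_onI, rule ccontr)
      fix a b assume a: "a \<in> {1..m-1}" and b: "b \<in> {1..m-1}" and eq: "\<omega> a = \<omega> b" and ne: "a \<noteq> b"
      have "\<bar>\<omega> a - T a \<epsilon>\<bar> \<le> C" "\<bar>\<omega> b - T b \<epsilon>\<bar> \<le> C" using om a b by auto
      then have "\<bar>T a \<epsilon> - T b \<epsilon>\<bar> \<le> 2 * C" using eq by linarith
      moreover have "\<bar>T a \<epsilon> - T b \<epsilon>\<bar> \<ge> 2 * LL \<epsilon>"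
      proof -
        have "\<bar>lam a - lam b\<bar> \<ge> 1" using ne lam_sep[of a b] lam_sep[of b a] by (cases "a < b") auto
        then have "2 * LL \<epsilon> * 1 \<le> 2 * LL \<epsilon> * \<bar>lam a - lam b\<bar>" using elim(3)
          by (intro mult_left_mono) auto
        also have "\<dots> = \<bar>T a \<epsilon> - T b \<epsilon>\<bar>" unfolding T_eq using elim(3)
          by (simp add: abs_mult right_diff_distrib[symmetric])
        finally show ?thesis by simp
      qed
      ultimately show False using elim(2) by simp
    qed
    have "char_poly (M \<epsilon>) = (\<Prod>n = 1..m - 1. [:- \<omega> n, 1:])"
    proof (rule monic_roots_prod)
      show "degree (char_poly (M \<epsilon>)) = m - 1" "coeff (char_poly (M \<epsilon>)) (m - 1) = 1"
        using degree_monic_char_poly[OF Mc] by auto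
    qed (use inj om in auto)
    then show ?case using om by blast
  qed
  then show ?thesis unfolding M_def T_def by blast
qed

end
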